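(* If there exists a non-principal nowhere dense ultrafilter on $\omega$, then there exists a $\sigma$-centered forcing notion $\mathbb{P}$ such that above every element of $\mathbb{P}$ there are two incompatible elements and $\mathbb{P}$ does not add a Cohen real.
   Context: Forcing order convention: $p\leqslant q$ means $q$ is stronger than $p$. $\mathbb{P}$ is $\sigma$-centered if $\mathbb{P}=\bigcup_{n<\omega}A_n$ with each $A_n$ directed (any two elements of $A_n$ have a common upper bound in $A_n$). $\mathbb{P}$ adds a Cohen real if there is a $\mathbb{P}$-name $\underline{r}$ for an element of ${}^\omega 2$ such that for every ground-model open dense $\mathcal{D}\subseteq{}^\omega 2$, $\Vdash_{\mathbb{P}}\underline{r}\in\mathcal{D}^*$, $\mathcal{D}^*$ being the reinterpretation of $\mathcal{D}$ in the extension. A filter $D$ on $\omega$ is nowhere dense if for every $f\colon\omega\to{}^\omega 2$ there is $A\in D$ with $f(A)$ nowhere dense in ${}^\omega 2$. *)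

theory Defs
  imports Main
begin

definition cyl :: "bool list \<Rightarrow> (nat \<Rightarrow> bool) set" where
  "cyl s = {x. \<forall>i<length s. x i = s ! i}"

definition cantor_open :: "(nat \<Rightarrow> bool) set \<Rightarrow> bool" where
  "cantor_open D \<longleftrightarrow> (\<forall>x\<in>D. \<exists>n. cyl (map x [0..<n]) \<subseteq> D)"

definition cantor_dense :: "(nat \<Rightarrow> bool) set \<Rightarrow> bool" where
  "cantor_dense D \<longleftrightarrow> (\<forall>s. cyl s \<inter> D \<noteq> {})"

definition cantor_nowhere_dense :: "(nat \<Rightarrow> bool) set \<Rightarrow> bool" where
  "cantor_nowhere_dense A \<longleftrightarrow> (\<forall>s. \<exists>t. cyl t \<subseteq> cyl s \<and> cyl t \<inter> A = {})"

definition ultrafilter_on_nat :: "nat set set \<Rightarrow> bool" where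
  "ultrafilter_on_nat U \<longleftrightarrow>
     UNIV \<in> U \<and> {} \<notin> U \<and>
     (\<forall>A B. A \<in> U \<longrightarrow> A \<subseteq> B \<longrightarrow> B \<in> U) \<and>
     (\<forall>A B. A \<in> U \<longrightarrow> B \<in> U \<longrightarrow> A \<inter> B \<in> U) \<and>
     (\<forall>A. A \<in> U \<or> - A \<in> U)"

definition nonprincipal :: "nat set set \<Rightarrow> bool" where
  "nonprincipal U \<longleftrightarrow> (\<forall>n. {n} \<notin> U)"

definition nowhere_dense_filter :: "nat set set \<Rightarrow> bool" where
  "nowhere_dense_filter D \<longleftrightarrow>
     (\<forall>f :: nat \<Rightarrow> (nat \<Rightarrow> bool). \<exists>A\<in>D. cantor_nowhere_dense (f ` A))"

section \<open>Forcing notions (p \<le> q means q is stronger)\<close>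

definition forcing_notion :: "'a set \<Rightarrow> ('a \<Rightarrow> 'a \<Rightarrow> bool) \<Rightarrow> bool" where
  "forcing_notion P le \<longleftrightarrow> P \<noteq> {} \<and> (\<forall>p\<in>P. le p p) \<and>
     (\<forall>p\<in>P. \<forall>q\<in>P. \<forall>r\<in>P. le p q \<longrightarrow> le q r \<longrightarrow> le p r)"

definition compatible :: "'a set \<Rightarrow> ('a \<Rightarrow> 'a \<Rightarrow> bool) \<Rightarrow> 'a \<Rightarrow> 'a \<Rightarrow> bool" where
  "compatible P le p q \<longleftrightarrow> (\<exists>r\<in>P. le p r \<and> le q r)"

definition directed_in :: "('a \<Rightarrow> 'a \<Rightarrow> bool) \<Rightarrow> 'a set \<Rightarrow> bool" where
  "directed_in le A \<longleftrightarrow> (\<forall>p\<in>A. \<forall>q\<in>A. \<exists>r\<in>A. le p r \<and> le q r)"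

definition sigma_centered :: "'a set \<Rightarrow> ('a \<Rightarrow> 'a \<Rightarrow> bool) \<Rightarrow> bool" where
  "sigma_centered P le \<longleftrightarrow>
     (\<exists>A :: nat \<Rightarrow> 'a set. P = (\<Union>n. A n) \<and> (\<forall>n. directed_in le (A n)))"

definition splitting_everywhere :: "'a set \<Rightarrow> ('a \<Rightarrow> 'a \<Rightarrow> bool) \<Rightarrow> bool" where
  "splitting_everywhere P le \<longleftrightarrow>
     (\<forall>p\<in>P. \<exists>q\<in>P. \<exists>r\<in>P. le p q \<and> le p r \<and> \<not> compatible P le q r)"

text \<open>A P-name for an element of \<omega>2, represented (as a nice name / Boolean-valued name)
  by its forcing relation  F p n b  meaning  "p \<Vdash> r(n) = b".\<close>
definition real_name :: "'a set \<Rightarrow> ('a \<Rightarrow> 'a \<Rightarrow> bool) \<Rightarrow> ('a \<Rightarrow> nat \<Rightarrow> bool \<Rightarrow> bool) \<Rightarrow> bool" where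
  "real_name P le F \<longleftrightarrow>
     (\<forall>p\<in>P. \<forall>q\<in>P. \<forall>n b. le p q \<longrightarrow> F p n b \<longrightarrow> F q n b) \<and>
     (\<forall>p\<in>P. \<forall>n. \<not> (F p n True \<and> F p n False)) \<and>
     (\<forall>p\<in>P. \<forall>n. \<exists>q\<in>P. le p q \<and> (\<exists>b. F q n b)) \<and>
     (\<forall>p\<in>P. \<forall>n b. (\<forall>q\<in>P. le p q \<longrightarrow> (\<exists>r\<in>P. le q r \<and> F r n b)) \<longrightarrow> F p n b)"

text \<open>For an open D, the reinterpretation D* is the union of the (reinterpreted) basic
  cylinders [s] with [s] \<subseteq> D; hence "\<Vdash> r \<in> D*" means: densely many conditions
  force r to extend some s with [s] \<subseteq> D.\<close>
definition forces_in_open :: "'a set \<Rightarrow> ('a \<Rightarrow> 'a \<Rightarrow> bool) \<Rightarrow> ('a \<Rightarrow> nat \<Rightarrow> bool \<Rightarrow> bool)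
    \<Rightarrow> (nat \<Rightarrow> bool) set \<Rightarrow> bool" where
  "forces_in_open P le F D \<longleftrightarrow>
     (\<forall>p\<in>P. \<exists>q\<in>P. le p q \<and> (\<exists>s. cyl s \<subseteq> D \<and> (\<forall>i<length s. F q i (s ! i))))"

definition adds_cohen_real :: "'a set \<Rightarrow> ('a \<Rightarrow> 'a \<Rightarrow> bool) \<Rightarrow> bool" where
  "adds_cohen_real P le \<longleftrightarrow>
     (\<exists>F. real_name P le F \<and>
        (\<forall>D. cantor_open D \<longrightarrow> cantor_dense D \<longrightarrow> forces_in_open P le F D))"

end

theory Submission
  imports Defs "HOL-Library.Nat_Bijection"
begin

lemma uf_facts: assumes "ultrafilter_on_nat U"
  shows "UNIV \<in> U" "{} \<notin> U" "A \<in> U \<Longrightarrow> A \<subseteq> B \<Longrightarrow> B \<in> U"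
    "A \<in> U \<Longrightarrow> B \<in> U \<Longrightarrow> A \<inter> B \<in> U" "A \<notin> U \<Longrightarrow> -A \<in> U"
  using assms unfolding ultrafilter_on_nat_def by blast+

definition uopen :: "nat set set \<Rightarrow> nat list set \<Rightarrow> bool" where
  "uopen U X \<longleftrightarrow> (\<forall>s\<in>X. {a. s @ [a] \<in> X} \<in> U)"

definition PP :: "nat set set \<Rightarrow> nat list set set" where
  "PP U = {X. X \<noteq> {} \<and> uopen U X}"

definition Up :: "nat list set \<Rightarrow> nat list \<Rightarrow> nat list set" where
  "Up X t = {t @ ys | ys. \<forall>k\<le>length ys. t @ take k ys \<in> X}"

lemma Up_sub: "Up X t \<subseteq> X"
proof
  fix x assume "x \<in> Up X t"
  then obtain ys where "x = t @ ys" "\<forall>k\<le>length ys. t @ take k ys \<in> X" unfolding Up_def by blast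
  then show "x \<in> X" by (metis order_refl take_all)
qed

lemma Up_self: "t \<in> X \<Longrightarrow> t \<in> Up X t"
  unfolding Up_def by force

lemma Up_prefix: "x \<in> Up X t \<Longrightarrow> \<exists>ys. x = t @ ys"
  unfolding Up_def by blast

lemma Up_open:
  assumes uf: "ultrafilter_on_nat U" and op: "uopen U X"
  shows "uopen U (Up X t)"
  unfolding uopen_def
proof
  fix w assume w: "w \<in> Up X t"
  then obtain ys where ys: "w = t @ ys" "\<forall>k\<le>length ys. t @ take k ys \<in> X" unfolding Up_def by blast
  have "w \<in> X" using w Up_sub by blast
  then have "{a. w @ [a] \<in> X} \<in> U" using op unfolding uopen_def by blast
  moreover have "{a. w @ [a] \<in> X} \<subseteq> {a. w @ [a] \<in> Up X t}"
  proof
    fix a assume a: "a \<in> {a. w @ [a] \<in> X}"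
    have "\<forall>k\<le>length (ys @ [a]). t @ take k (ys @ [a]) \<in> X"
    proof (intro allI impI)
      fix k assume "k \<le> length (ys @ [a])"
      then consider "k \<le> length ys" | "k = Suc (length ys)" by force
      then show "t @ take k (ys @ [a]) \<in> X"
        using a ys by cases auto
    qed
    then show "a \<in> {a. w @ [a] \<in> Up X t}" unfolding Up_def using ys by auto
  qed
  ultimately show "{a. w @ [a] \<in> Up X t} \<in> U" using uf_facts(3)[OF uf] by blast
qed

lemma Up_PP: "ultrafilter_on_nat U \<Longrightarrow> X \<in> PP U \<Longrightarrow> t \<in> X \<Longrightarrow> Up X t \<in> PP U"
proof -
  assume a: "ultrafilter_on_nat U" "X \<in> PP U" "t \<in> X"
  then have "uopen U X" unfolding PP_def by simp
  then have "uopen U (Up X t)" using Up_open[OF a(1)] by simp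
  moreover have "t \<in> Up X t" using Up_self[OF a(3)] .
  ultimately show ?thesis unfolding PP_def by auto
qed

lemma Up_disj: "a \<noteq> b \<Longrightarrow> Up X (s @ [a]) \<inter> Up X' (s @ [b]) = {}"
proof -
  assume "a \<noteq> b"
  { fix x assume 1: "x \<in> Up X (s @ [a])" and 2: "x \<in> Up X' (s @ [b])"
    obtain ys where "x = (s @ [a]) @ ys" using Up_prefix[OF 1] by blast
    moreover obtain zs where "x = (s @ [b]) @ zs" using Up_prefix[OF 2] by blast
    ultimately have "a = b" by simp }
  then show ?thesis using \<open>a \<noteq> b\<close> by blast
qed

lemma ball_imgI: "(\<And>x. x \<in> A \<Longrightarrow> Q (f x)) \<Longrightarrow> \<forall>y\<in>f ` A. Q y" by blast
lemma bex_imgI: "x \<in> A \<Longrightarrow> Q (f x) \<Longrightarrow> \<exists>y\<in>f ` A. Q y" by blast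
lemma bex_imgE: "\<exists>y\<in>f ` A. Q y \<Longrightarrow> (\<And>x. x \<in> A \<Longrightarrow> Q (f x) \<Longrightarrow> R) \<Longrightarrow> R" by blast

lemma rn1: "real_name P le F \<Longrightarrow> p \<in> P \<Longrightarrow> q \<in> P \<Longrightarrow> le p q \<Longrightarrow> F p n b \<Longrightarrow> F q n b"
  unfolding real_name_def by blast
lemma rn2: "real_name P le F \<Longrightarrow> p \<in> P \<Longrightarrow> \<not> (F p n True \<and> F p n False)"
  unfolding real_name_def by blast
lemma rn3: "real_name P le F \<Longrightarrow> p \<in> P \<Longrightarrow> \<exists>q\<in>P. le p q \<and> (\<exists>b. F q n b)"
  unfolding real_name_def by blast
lemma rn4: "real_name P le F \<Longrightarrow> p \<in> P \<Longrightarrow> (\<forall>q\<in>P. le p q \<longrightarrow> (\<exists>r\<in>P. le q r \<and> F r n b)) \<Longrightarrow> F p n b"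
  unfolding real_name_def by blast
lemma rnI: "(\<And>p q n b. p \<in> P \<Longrightarrow> q \<in> P \<Longrightarrow> le p q \<Longrightarrow> F p n b \<Longrightarrow> F q n b) \<Longrightarrow>
  (\<And>p n. p \<in> P \<Longrightarrow> \<not> (F p n True \<and> F p n False)) \<Longrightarrow>
  (\<And>p n. p \<in> P \<Longrightarrow> \<exists>q\<in>P. le p q \<and> (\<exists>b. F q n b)) \<Longrightarrow>
  (\<And>p n b. p \<in> P \<Longrightarrow> (\<forall>q\<in>P. le p q \<longrightarrow> (\<exists>r\<in>P. le q r \<and> F r n b)) \<Longrightarrow> F p n b) \<Longrightarrow>
  real_name P le F"
  unfolding real_name_def by blast
lemma fioD: "forces_in_open P le F D \<Longrightarrow> p \<in> P \<Longrightarrow> \<exists>q\<in>P. le p q \<and> (\<exists>s. cyl s \<subseteq> D \<and> (\<forall>i<length s. F q i (s ! i)))"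
  unfolding forces_in_open_def by blast

lemma tr_sp:
  assumes inj: "inj e" and sp: "splitting_everywhere P0 (\<lambda>p q. q \<subseteq> p)"
  shows "splitting_everywhere ((\<lambda>X. e ` X) ` P0) (\<lambda>p q. q \<subseteq> p)"
  unfolding splitting_everywhere_def
proof (rule ball_imgI)
  have sub: "e ` A \<subseteq> e ` B \<longleftrightarrow> A \<subseteq> B" for A B using inj by (simp add: inj_image_subset_iff)
  fix p0 assume p0: "p0 \<in> P0"
  then obtain q r where qr: "q \<in> P0" "r \<in> P0" "q \<subseteq> p0" "r \<subseteq> p0" "\<not> compatible P0 (\<lambda>p q. q \<subseteq> p) q r"
    using sp unfolding splitting_everywhere_def by blast
  have nc: "\<not> compatible ((\<lambda>X. e ` X) ` P0) (\<lambda>p q. q \<subseteq> p) (e ` q) (e ` r)"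
  proof
    assume "compatible ((\<lambda>X. e ` X) ` P0) (\<lambda>p q. q \<subseteq> p) (e ` q) (e ` r)"
    then have "\<exists>y\<in>(\<lambda>X. e ` X) ` P0. y \<subseteq> e ` q \<and> y \<subseteq> e ` r" unfolding compatible_def by simp
    then obtain s0 where "s0 \<in> P0" "e ` s0 \<subseteq> e ` q" "e ` s0 \<subseteq> e ` r" by (rule bex_imgE) blast
    then have "s0 \<in> P0" "s0 \<subseteq> q" "s0 \<subseteq> r" using sub by simp_all
    then have "compatible P0 (\<lambda>p q. q \<subseteq> p) q r" unfolding compatible_def by blast
    then show False using qr(5) by contradiction
  qed
  have "e ` q \<subseteq> e ` p0" using qr(3) by (rule image_mono)
  moreover have "e ` r \<subseteq> e ` p0" using qr(4) by (rule image_mono)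
  ultimately show "\<exists>q\<in>(\<lambda>X. e ` X) ` P0. \<exists>r\<in>(\<lambda>X. e ` X) ` P0. q \<subseteq> e ` p0 \<and> r \<subseteq> e ` p0 \<and> \<not> compatible ((\<lambda>X. e ` X) ` P0) (\<lambda>p q. q \<subseteq> p) q r"
    using nc by (intro bex_imgI[OF qr(1)] bex_imgI[OF qr(2)] conjI) 
qed

lemma tr_nc:
  assumes inj: "inj e" and nc: "\<not> adds_cohen_real P0 (\<lambda>p q. q \<subseteq> p)"
  shows "\<not> adds_cohen_real ((\<lambda>X. e ` X) ` P0) (\<lambda>p q. q \<subseteq> p)"
proof
  have sub: "e ` A \<subseteq> e ` B \<longleftrightarrow> A \<subseteq> B" for A B using inj by (simp add: inj_image_subset_iff)
  assume "adds_cohen_real ((\<lambda>X. e ` X) ` P0) (\<lambda>p q. q \<subseteq> p)"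
  then obtain F where FF: "real_name ((\<lambda>X. e ` X) ` P0) (\<lambda>p q. q \<subseteq> p) F \<and>
     (\<forall>D. cantor_open D \<longrightarrow> cantor_dense D \<longrightarrow> forces_in_open ((\<lambda>X. e ` X) ` P0) (\<lambda>p q. q \<subseteq> p) F D)"
    unfolding adds_cohen_real_def by (elim exE)
  have F1: "real_name ((\<lambda>X. e ` X) ` P0) (\<lambda>p q. q \<subseteq> p) F" using FF by (rule conjunct1)
  have F2: "forces_in_open ((\<lambda>X. e ` X) ` P0) (\<lambda>p q. q \<subseteq> p) F D" if "cantor_open D" "cantor_dense D" for D
    using FF that by simp
  have img: "x \<in> P0 \<Longrightarrow> e ` x \<in> (\<lambda>X. e ` X) ` P0" for x by (erule rev_image_eqI) (rule refl)
  have R1: "F (e ` q) n b" if "p \<in> P0" "q \<in> P0" "q \<subseteq> p" "F (e ` p) n b" for p q n b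
    using rn1[OF F1 img[OF that(1)] img[OF that(2)], of n b] image_mono[OF that(3), of e] that(4) by simp
  have R2: "\<not> (F (e ` p) n True \<and> F (e ` p) n False)" if "p \<in> P0" for p n
    using rn2[OF F1 img[OF that]] .
  have R3: "\<exists>q\<in>P0. q \<subseteq> p \<and> (\<exists>b. F (e ` q) n b)" if p: "p \<in> P0" for p n
  proof -
    have "\<exists>y\<in>(\<lambda>X. e ` X) ` P0. y \<subseteq> e ` p \<and> (\<exists>b. F y n b)"
      using rn3[OF F1 img[OF p], of n] by simp
    then obtain q where q: "q \<in> P0" "e ` q \<subseteq> e ` p" "\<exists>b. F (e ` q) n b" by (rule bex_imgE) blast
    then have "q \<subseteq> p" using sub by simp
    then show ?thesis using q by blast
  qed
  have R4: "F (e ` p) n b" if p: "p \<in> P0" and H: "\<forall>q\<in>P0. q \<subseteq> p \<longrightarrow> (\<exists>r\<in>P0. r \<subseteq> q \<and> F (e ` r) n b)" for p n b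
  proof -
    have "\<forall>y\<in>(\<lambda>X. e ` X) ` P0. y \<subseteq> e ` p \<longrightarrow> (\<exists>r\<in>(\<lambda>X. e ` X) ` P0. r \<subseteq> y \<and> F r n b)"
    proof (rule ball_imgI, rule impI)
      fix q assume q: "q \<in> P0" "e ` q \<subseteq> e ` p"
      then have "q \<subseteq> p" using sub by simp
      then obtain r where r: "r \<in> P0" "r \<subseteq> q" "F (e ` r) n b" using H q(1) by blast
      have "e ` r \<subseteq> e ` q" using r(2) by (rule image_mono)
      then show "\<exists>r\<in>(\<lambda>X. e ` X) ` P0. r \<subseteq> e ` q \<and> F r n b"
        using r(3) by (intro bex_imgI[OF r(1)] conjI)
    qed
    then show ?thesis using rn4[OF F1 img[OF p], of n b] by simp
  qed
  define F' where "F' = (\<lambda>X. F (e ` X))"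
  have "real_name P0 (\<lambda>p q. q \<subseteq> p) F'"
    unfolding F'_def using R1 R2 R3 R4 by (rule rnI)
  moreover have "forces_in_open P0 (\<lambda>p q. q \<subseteq> p) F' D" if D: "cantor_open D" "cantor_dense D" for D
    unfolding forces_in_open_def F'_def
  proof
    fix p assume p: "p \<in> P0"
    have "\<exists>y\<in>(\<lambda>X. e ` X) ` P0. y \<subseteq> e ` p \<and> (\<exists>s. cyl s \<subseteq> D \<and> (\<forall>i<length s. F y i (s ! i)))"
      using fioD[OF F2[OF D] img[OF p]] by simp
    then obtain q where q: "q \<in> P0" "e ` q \<subseteq> e ` p" "\<exists>s. cyl s \<subseteq> D \<and> (\<forall>i<length s. F (e ` q) i (s ! i))"
      by (rule bex_imgE) blast
    then have "q \<subseteq> p" using sub by simp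
    then show "\<exists>q\<in>P0. q \<subseteq> p \<and> (\<exists>s. cyl s \<subseteq> D \<and> (\<forall>i<length s. F (e ` q) i (s ! i)))"
      using q by blast
  qed
  ultimately have "adds_cohen_real P0 (\<lambda>p q. q \<subseteq> p)"
    unfolding adds_cohen_real_def by blast
  then show False using nc by contradiction
qed
lemma tr_fn:
  assumes "forcing_notion P0 (\<lambda>p q. q \<subseteq> p)"
  shows "forcing_notion ((\<lambda>X. e ` X) ` P0) (\<lambda>p q. q \<subseteq> p)"
proof -
  have "(\<lambda>X. e ` X) ` P0 \<noteq> {}" using assms unfolding forcing_notion_def by simp
  then show ?thesis unfolding forcing_notion_def by (meson order_refl subset_trans)
qed


lemma tr_sc:
  fixes P0 :: "'a set set" and e :: "'a \<Rightarrow> 'b"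
  assumes "sigma_centered P0 (\<lambda>p q. q \<subseteq> p)"
  shows "sigma_centered ((\<lambda>X. e ` X) ` P0) (\<lambda>p q. q \<subseteq> p)"
proof -
  obtain A :: "nat \<Rightarrow> 'a set set" where A: "P0 = (\<Union>n. A n)" "\<And>n. directed_in (\<lambda>p q. q \<subseteq> p) (A n)"
    using assms unfolding sigma_centered_def by blast
  have "(\<lambda>X. e ` X) ` P0 = (\<Union>n. (\<lambda>X. e ` X) ` A n)" using A(1) by (simp add: image_UN)
  moreover have "directed_in (\<lambda>p q. q \<subseteq> p) ((\<lambda>X. e ` X) ` A n)" for n
  proof -
    have "\<exists>r\<in>(\<lambda>X. e ` X) ` A n. r \<subseteq> p \<and> r \<subseteq> q"
      if pin: "p \<in> (\<lambda>X. e ` X) ` A n" "q \<in> (\<lambda>X. e ` X) ` A n" for p q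
    proof -
      obtain p0 where "p0 \<in> A n" "p = e ` p0" using pin(1) by (rule imageE)
      moreover obtain q0 where "q0 \<in> A n" "q = e ` q0" using pin(2) by (rule imageE)
      ultimately have pq: "p0 \<in> A n" "q0 \<in> A n" "p = e ` p0" "q = e ` q0" by auto
      then obtain r0 where r0: "r0 \<in> A n" "r0 \<subseteq> p0" "r0 \<subseteq> q0"
        using A(2)[of n] unfolding directed_in_def by blast
      have 1: "e ` r0 \<in> (\<lambda>X. e ` X) ` A n" using r0(1) by (rule rev_image_eqI) (rule refl)
      have 2: "e ` r0 \<subseteq> p" unfolding pq(3) using r0(2) by (rule image_mono)
      have 3: "e ` r0 \<subseteq> q" unfolding pq(4) using r0(3) by (rule image_mono)
      show ?thesis
      proof (rule bexI[of _ "e ` r0"])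
        show "e ` r0 \<subseteq> p \<and> e ` r0 \<subseteq> q" using 2 3 by (rule conjI)
      qed (rule 1)
    qed
    then show ?thesis unfolding directed_in_def by simp
  qed
  ultimately show ?thesis unfolding sigma_centered_def by blast
qed

lemma cyl_iff: "x \<in> cyl s \<longleftrightarrow> (\<forall>i<length s. x i = s ! i)"
  by (simp add: cyl_def)

lemma nd_empty: "cantor_nowhere_dense {}"
  unfolding cantor_nowhere_dense_def by blast

lemma nd_Un:
  assumes "cantor_nowhere_dense A" "cantor_nowhere_dense B"
  shows "cantor_nowhere_dense (A \<union> B)"
  unfolding cantor_nowhere_dense_def
proof
  fix s
  obtain t1 where t1: "cyl t1 \<subseteq> cyl s" "cyl t1 \<inter> A = {}"
    using assms(1) unfolding cantor_nowhere_dense_def by blast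
  obtain t2 where t2: "cyl t2 \<subseteq> cyl t1" "cyl t2 \<inter> B = {}"
    using assms(2) unfolding cantor_nowhere_dense_def by blast
  have "cyl t2 \<subseteq> cyl s" using t1 t2 by (rule_tac subset_trans) auto
  moreover have "cyl t2 \<inter> (A \<union> B) = {}" using t1 t2 by blast
  ultimately show "\<exists>t. cyl t \<subseteq> cyl s \<and> cyl t \<inter> (A \<union> B) = {}" by blast
qed

lemma nd_single: "cantor_nowhere_dense {x}"
  unfolding cantor_nowhere_dense_def
proof
  fix s
  let ?t = "s @ [\<not> x (length s)]"
  have "cyl ?t \<subseteq> cyl s"
  proof
    fix y assume "y \<in> cyl ?t"
    then have "\<forall>i<length s. y i = ?t ! i" unfolding cyl_iff by simp
    then show "y \<in> cyl s" unfolding cyl_iff by (simp add: nth_append)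
  qed
  moreover have "x \<notin> cyl ?t" unfolding cyl_iff
    by (auto intro!: exI[of _ "length s"])
  ultimately show "\<exists>t. cyl t \<subseteq> cyl s \<and> cyl t \<inter> {x} = {}" by blast
qed

lemma nd_insert: "cantor_nowhere_dense A \<Longrightarrow> cantor_nowhere_dense (insert x A)"
  using nd_Un[OF nd_single] by (metis insert_is_Un)

lemma nd_UN:
  assumes "finite I" "\<And>i. i \<in> I \<Longrightarrow> cantor_nowhere_dense (B i)"
  shows "cantor_nowhere_dense (\<Union>i\<in>I. B i)"
  using assms
proof (induction rule: finite_induct)
  case empty then show ?case by (simp add: nd_empty)
next
  case (insert x F)
  then show ?case by (simp add: nd_Un)
qed

locale uctx =
  fixes U :: "nat set set"
  assumes uf: "ultrafilter_on_nat U" and np: "nonprincipal U" and ndf: "nowhere_dense_filter U"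
begin

lemma U_UNIV: "UNIV \<in> U" using uf_facts(1)[OF uf] .
lemma U_empty: "{} \<notin> U" using uf_facts(2)[OF uf] .
lemma U_mono: "A \<in> U \<Longrightarrow> A \<subseteq> B \<Longrightarrow> B \<in> U" using uf_facts(3)[OF uf] .
lemma U_Int: "A \<in> U \<Longrightarrow> B \<in> U \<Longrightarrow> A \<inter> B \<in> U" using uf_facts(4)[OF uf] .
lemma U_compl: "A \<notin> U \<Longrightarrow> -A \<in> U" using uf_facts(5)[OF uf] .

lemma U_ne: "A \<in> U \<Longrightarrow> \<exists>x. x \<in> A"
  using U_empty by (metis equals0I)

lemma U_finite: "finite A \<Longrightarrow> A \<notin> U"
proof (induction rule: finite_induct)
  case empty then show ?case by (rule U_empty)
next
  case (insert x B)
  show ?case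
  proof
    assume xB: "insert x B \<in> U"
    have "{x} \<notin> U" using np unfolding nonprincipal_def by blast
    then have "-{x} \<in> U" by (rule U_compl)
    then have "insert x B \<inter> -{x} \<in> U" using xB U_Int by blast
    moreover have "insert x B \<inter> -{x} \<subseteq> B" by blast
    ultimately have "B \<in> U" by (rule U_mono)
    then show False using insert.IH by contradiction
  qed
qed

lemma U_two: "A \<in> U \<Longrightarrow> \<exists>a b. a \<in> A \<and> b \<in> A \<and> a \<noteq> b"
proof -
  assume A: "A \<in> U"
  then have inf: "infinite A" using U_finite by blast
  then obtain a where a: "a \<in> A" using infinite_imp_nonempty by blast
  have "infinite (A - {a})" using inf by simp
  then obtain b where "b \<in> A - {a}" using infinite_imp_nonempty by blast
  then show ?thesis using a by blast
qed

lemma PP_UNIV: "UNIV \<in> PP U"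
  unfolding PP_def uopen_def using U_UNIV by simp

lemma PP_Int: "X \<in> PP U \<Longrightarrow> Y \<in> PP U \<Longrightarrow> s \<in> X \<Longrightarrow> s \<in> Y \<Longrightarrow> X \<inter> Y \<in> PP U"
proof -
  assume a: "X \<in> PP U" "Y \<in> PP U" "s \<in> X" "s \<in> Y"
  have "{c. w @ [c] \<in> X \<inter> Y} \<in> U" if w: "w \<in> X \<inter> Y" for w
  proof -
    have "{c. w @ [c] \<in> X} \<in> U" "{c. w @ [c] \<in> Y} \<in> U" using a(1,2) w unfolding PP_def uopen_def by blast+
    then have "{c. w @ [c] \<in> X} \<inter> {c. w @ [c] \<in> Y} \<in> U" by (rule U_Int)
    moreover have "{c. w @ [c] \<in> X} \<inter> {c. w @ [c] \<in> Y} = {c. w @ [c] \<in> X \<inter> Y}" by blast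
    ultimately show ?thesis by simp
  qed
  then show ?thesis unfolding PP_def uopen_def using a(3,4) by blast
qed

lemma PP_open: "X \<in> PP U \<Longrightarrow> w \<in> X \<Longrightarrow> {c. w @ [c] \<in> X} \<in> U"
  unfolding PP_def uopen_def by blast

lemma PP_ne: "X \<in> PP U \<Longrightarrow> \<exists>w. w \<in> X"
  unfolding PP_def by blast

theorem fn_PP: "forcing_notion (PP U) (\<lambda>p q. q \<subseteq> p)"
proof -
  have "PP U \<noteq> {}" using PP_UNIV by blast
  moreover have "\<forall>p\<in>S. \<forall>q\<in>S. \<forall>r\<in>S. q \<subseteq> p \<longrightarrow> r \<subseteq> q \<longrightarrow> r \<subseteq> p" for S :: "nat list set set"
    by blast
  ultimately show ?thesis unfolding forcing_notion_def by blast
qed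

theorem sc_PP: "sigma_centered (PP U) (\<lambda>p q. q \<subseteq> p)"
proof -
  define A where "A n = {X \<in> PP U. list_decode n \<in> X}" for n
  have "PP U = (\<Union>n. A n)"
  proof
    show "PP U \<subseteq> (\<Union>n. A n)"
    proof
      fix X assume X: "X \<in> PP U"
      then obtain w where "w \<in> X" using PP_ne by blast
      then have "X \<in> A (list_encode w)" unfolding A_def using X by simp
      then show "X \<in> (\<Union>n. A n)" by blast
    qed
    show "(\<Union>n. A n) \<subseteq> PP U" unfolding A_def by blast
  qed
  moreover have "directed_in (\<lambda>p q. q \<subseteq> p) (A n)" for n
    unfolding directed_in_def
  proof (intro ballI)
    fix X Y assume "X \<in> A n" "Y \<in> A n"
    then have "X \<inter> Y \<in> A n" unfolding A_def using PP_Int by blast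
    then show "\<exists>r\<in>A n. r \<subseteq> X \<and> r \<subseteq> Y" by blast
  qed
  ultimately show ?thesis unfolding sigma_centered_def by blast
qed

theorem sp_PP: "splitting_everywhere (PP U) (\<lambda>p q. q \<subseteq> p)"
  unfolding splitting_everywhere_def
proof
  fix X assume X: "X \<in> PP U"
  then obtain s where s: "s \<in> X" using PP_ne by blast
  then obtain a b where ab: "a \<in> {c. s @ [c] \<in> X}" "b \<in> {c. s @ [c] \<in> X}" "a \<noteq> b"
    using U_two[OF PP_open[OF X s]] by blast
  let ?q = "Up X (s @ [a])" and ?r = "Up X (s @ [b])"
  have q: "?q \<in> PP U" using Up_PP[OF uf X] ab(1) by simp
  have r: "?r \<in> PP U" using Up_PP[OF uf X] ab(2) by simp
  have "\<not> compatible (PP U) (\<lambda>p q. q \<subseteq> p) ?q ?r"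
  proof
    assume "compatible (PP U) (\<lambda>p q. q \<subseteq> p) ?q ?r"
    then obtain Y where Y: "Y \<in> PP U" "Y \<subseteq> ?q" "Y \<subseteq> ?r" unfolding compatible_def by blast
    then obtain w where "w \<in> Y" using PP_ne by blast
    then have "w \<in> ?q \<inter> ?r" using Y by blast
    then show False using Up_disj[OF ab(3)] by blast
  qed
  then show "\<exists>q\<in>PP U. \<exists>r\<in>PP U. q \<subseteq> X \<and> r \<subseteq> X \<and> \<not> compatible (PP U) (\<lambda>p q. q \<subseteq> p) q r"
    using q r Up_sub by blast
qed

end

locale nctx = uctx +
  fixes F :: "nat list set \<Rightarrow> nat \<Rightarrow> bool \<Rightarrow> bool"
  assumes rn: "real_name (PP U) (\<lambda>p q. q \<subseteq> p) F"
begin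

lemma F_mono: "X \<in> PP U \<Longrightarrow> Y \<in> PP U \<Longrightarrow> Y \<subseteq> X \<Longrightarrow> F X i b \<Longrightarrow> F Y i b"
  using rn1[OF rn, of X Y] by simp

definition dec :: "nat list \<Rightarrow> nat \<Rightarrow> bool \<Rightarrow> bool" where
  "dec s i b \<longleftrightarrow> (\<exists>X\<in>PP U. s \<in> X \<and> F X i b)"

lemma decI: "X \<in> PP U \<Longrightarrow> s \<in> X \<Longrightarrow> F X i b \<Longrightarrow> dec s i b"
  unfolding dec_def by blast

lemma dec_cons: "\<not> (dec s i True \<and> dec s i False)"
proof
  assume "dec s i True \<and> dec s i False"
  then obtain X Y where X: "X \<in> PP U" "s \<in> X" "F X i True" and Y: "Y \<in> PP U" "s \<in> Y" "F Y i False"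
    unfolding dec_def by blast
  have XY: "X \<inter> Y \<in> PP U" using PP_Int X Y by blast
  have "F (X \<inter> Y) i True" using F_mono[OF X(1) XY _ X(3)] by blast
  moreover have "F (X \<inter> Y) i False" using F_mono[OF Y(1) XY _ Y(3)] by blast
  ultimately show False using rn2[OF rn XY, of i] by blast
qed

lemma dec_glue:
  assumes S: "{a. dec (s @ [a]) i b} \<in> U"
  shows "dec s i b"
proof -
  define S where "S = {a. dec (s @ [a]) i b}"
  have "\<forall>a\<in>S. \<exists>X. X \<in> PP U \<and> s @ [a] \<in> X \<and> F X i b" unfolding S_def dec_def by blast
  then obtain G where G: "\<And>a. a \<in> S \<Longrightarrow> G a \<in> PP U \<and> s @ [a] \<in> G a \<and> F (G a) i b"
    by metis
  define X where "X = insert s (\<Union>a\<in>S. Up (G a) (s @ [a]))"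
  have key: "w \<in> Up (G a) (s @ [a])" if w: "w \<in> X" "a \<in> S" "w = (s @ [a]) @ ys" for w a ys
  proof -
    have "w \<noteq> s" using w(3) by simp
    then obtain a' where a': "a' \<in> S" "w \<in> Up (G a') (s @ [a'])" using w(1) unfolding X_def by blast
    then obtain ys' where "w = (s @ [a']) @ ys'" using Up_prefix by blast
    then have "a' = a" using w(3) by simp
    then show ?thesis using a' by simp
  qed
  have Xopen: "uopen U X"
    unfolding uopen_def
  proof
    fix w assume w: "w \<in> X"
    show "{c. w @ [c] \<in> X} \<in> U"
    proof (cases "w = s")
      case True
      have "S \<subseteq> {c. w @ [c] \<in> X}"
      proof
        fix c assume c: "c \<in> S"
        then have "s @ [c] \<in> Up (G c) (s @ [c])" using G Up_self by blast
        then show "c \<in> {c. w @ [c] \<in> X}" unfolding X_def using c True by blast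
      qed
      then show ?thesis using S unfolding S_def by (rule U_mono[rotated])
    next
      case False
      then obtain a where a: "a \<in> S" "w \<in> Up (G a) (s @ [a])" using w unfolding X_def by blast
      have "uopen U (G a)" using G[OF a(1)] unfolding PP_def by blast
      then have "uopen U (Up (G a) (s @ [a]))" by (rule Up_open[OF uf])
      then have "{c. w @ [c] \<in> Up (G a) (s @ [a])} \<in> U" using a(2) unfolding uopen_def by blast
      moreover have "{c. w @ [c] \<in> Up (G a) (s @ [a])} \<subseteq> {c. w @ [c] \<in> X}" unfolding X_def using a(1) by blast
      ultimately show ?thesis by (rule U_mono)
    qed
  qed
  have XP: "X \<in> PP U" unfolding PP_def using Xopen X_def by blast
  have "F X i b"
  proof (rule rn4[OF rn XP], intro ballI impI)
    fix q assume q: "q \<in> PP U" "X \<supseteq> q"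
    obtain w where w: "w \<in> q" using PP_ne[OF q(1)] by blast
    obtain w' a where w': "w' \<in> q" "a \<in> S" "w' \<in> Up (G a) (s @ [a])"
    proof (cases "w = s")
      case True
      have "{c. s @ [c] \<in> q} \<inter> S \<in> U" using U_Int[OF PP_open[OF q(1)] S] w True unfolding S_def by simp
      then obtain a where a: "s @ [a] \<in> q" "a \<in> S" using U_ne by blast
      then have "s @ [a] \<in> Up (G a) (s @ [a])" using G Up_self by blast
      then show ?thesis using that a by blast
    next
      case False
      then obtain a where "a \<in> S" "w \<in> Up (G a) (s @ [a])" using w q(2) unfolding X_def by blast
      then show ?thesis using that w by blast
    qed
    let ?r = "Up q w'"
    have rP: "?r \<in> PP U" using Up_PP[OF uf q(1) w'(1)] .
    have rq: "?r \<subseteq> q" by (rule Up_sub)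
    have rG: "?r \<subseteq> G a"
    proof
      fix x assume x: "x \<in> ?r"
      then obtain ys where ys: "x = w' @ ys" using Up_prefix by blast
      obtain zs where zs: "w' = (s @ [a]) @ zs" using Up_prefix[OF w'(3)] by blast
      have "x \<in> X" using x rq q(2) by blast
      then have "x \<in> Up (G a) (s @ [a])" using key[of x a "zs @ ys"] w'(2) ys zs by simp
      then show "x \<in> G a" using Up_sub by blast
    qed
    have "F ?r i b" using F_mono[OF _ rP rG] G[OF w'(2)] by blast
    then show "\<exists>r\<in>PP U. q \<supseteq> r \<and> F r i b" using rP rq by blast
  qed
  then show ?thesis using XP decI unfolding X_def by blast
qed

lemma dec_total: "dec s i True \<or> dec s i False"
proof (rule ccontr)
  assume nd: "\<not> (dec s i True \<or> dec s i False)"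
  define ND where "ND = {w. \<not> dec w i True \<and> \<not> dec w i False}"
  have "uopen U ND"
    unfolding uopen_def
  proof
    fix w assume w: "w \<in> ND"
    have "{a. dec (w @ [a]) i True} \<notin> U" using dec_glue w unfolding ND_def by blast
    then have 1: "-{a. dec (w @ [a]) i True} \<in> U" by (rule U_compl)
    have "{a. dec (w @ [a]) i False} \<notin> U" using dec_glue w unfolding ND_def by blast
    then have 2: "-{a. dec (w @ [a]) i False} \<in> U" by (rule U_compl)
    have "-{a. dec (w @ [a]) i True} \<inter> -{a. dec (w @ [a]) i False} \<in> U" using U_Int[OF 1 2] .
    moreover have "-{a. dec (w @ [a]) i True} \<inter> -{a. dec (w @ [a]) i False} \<subseteq> {a. w @ [a] \<in> ND}"
      unfolding ND_def by blast
    ultimately show "{a. w @ [a] \<in> ND} \<in> U" by (rule U_mono)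
  qed
  moreover have "s \<in> ND" using nd unfolding ND_def by blast
  ultimately have NDP: "ND \<in> PP U" unfolding PP_def by blast
  obtain q b where q: "q \<in> PP U" "q \<subseteq> ND" "F q i b" using rn3[OF rn NDP, of i] by blast
  obtain w where w: "w \<in> q" using PP_ne[OF q(1)] by blast
  have "dec w i b" using decI[OF q(1) w q(3)] .
  moreover have "w \<in> ND" using w q(2) by blast
  ultimately show False unfolding ND_def by (cases b) auto
qed

definition z :: "nat list \<Rightarrow> nat \<Rightarrow> bool" where
  "z s i = dec s i True"

lemma dec_z: "dec s i b \<longleftrightarrow> z s i = b"
  unfolding z_def using dec_cons[of s i] dec_total[of s i] by (cases b) auto

lemma z_lim: "{a. z (s @ [a]) i = z s i} \<in> U"
proof -
  have "dec s i (z s i)" using dec_z by simp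
  then obtain X where X: "X \<in> PP U" "s \<in> X" "F X i (z s i)" unfolding dec_def by blast
  have "{a. s @ [a] \<in> X} \<subseteq> {a. z (s @ [a]) i = z s i}"
  proof
    fix a assume "a \<in> {a. s @ [a] \<in> X}"
    then have "dec (s @ [a]) i (z s i)" using decI[OF X(1) _ X(3)] by blast
    then show "a \<in> {a. z (s @ [a]) i = z s i}" using dec_z by simp
  qed
  then show ?thesis using PP_open[OF X(1,2)] U_mono by blast
qed

lemma z_agree: "{a. \<forall>i<k. z (s @ [a]) i = z s i} \<in> U"
proof (induction k)
  case 0 then show ?case using U_UNIV by simp
next
  case (Suc k)
  have "{a. \<forall>i<k. z (s @ [a]) i = z s i} \<inter> {a. z (s @ [a]) k = z s k} \<in> U"
    using U_Int[OF Suc.IH z_lim] .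
  moreover have "{a. \<forall>i<k. z (s @ [a]) i = z s i} \<inter> {a. z (s @ [a]) k = z s k} = {a. \<forall>i<Suc k. z (s @ [a]) i = z s i}"
    by (auto simp: less_Suc_eq)
  ultimately show ?case by simp
qed

end

definition idx :: "nat list \<Rightarrow> nat" where "idx s = length s + sum_list s"

lemma idx_app: "idx (xs @ ys) = idx xs + idx ys" unfolding idx_def by simp

lemma idx_take_mono: "m \<le> n \<Longrightarrow> idx (take m t) \<le> idx (take n t)"
proof -
  assume "m \<le> n"
  then have "take n t = take m t @ drop m (take n t)"
    by (metis append_take_drop_id min.absorb1 take_take)
  then have "idx (take n t) = idx (take m t) + idx (drop m (take n t))" by (metis idx_app)
  then show ?thesis by simp
qed

lemma finite_idx: "finite {s. idx s \<le> j}"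
proof -
  have "{s. idx s \<le> j} \<subseteq> {xs. set xs \<subseteq> {0..j} \<and> length xs \<le> j}"
  proof
    fix s assume "s \<in> {s. idx s \<le> j}"
    then have h: "length s + sum_list s \<le> j" unfolding idx_def by simp
    have "x \<le> j" if "x \<in> set s" for x using member_le_sum_list[OF that] h by linarith
    then show "s \<in> {xs. set xs \<subseteq> {0..j} \<and> length xs \<le> j}" using h by auto
  qed
  moreover have "finite {xs. set xs \<subseteq> {0..j} \<and> length xs \<le> j}"
    by (rule finite_lists_length_le) simp
  ultimately show ?thesis by (rule finite_subset)
qed

lemma finite_bool_lists: "finite {u :: bool list. length u \<le> n}"
proof -
  have "finite {xs :: bool list. set xs \<subseteq> UNIV \<and> length xs \<le> n}"
    by (rule finite_lists_length_le) simp
  then show ?thesis by simp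
qed

context nctx
begin

definition A' :: "nat list \<Rightarrow> nat set" where
  "A' s = (SOME A. A \<in> U \<and> cantor_nowhere_dense ((\<lambda>a. z (s @ [a])) ` A))"

lemma A'_prop: "A' s \<in> U \<and> cantor_nowhere_dense ((\<lambda>a. z (s @ [a])) ` A' s)"
proof -
  have "\<exists>A\<in>U. cantor_nowhere_dense ((\<lambda>a. z (s @ [a])) ` A)"
    using ndf unfolding nowhere_dense_filter_def by blast
  then have "\<exists>A. A \<in> U \<and> cantor_nowhere_dense ((\<lambda>a. z (s @ [a])) ` A)" by blast
  then show ?thesis unfolding A'_def by (rule someI_ex)
qed

definition K :: "nat \<Rightarrow> (nat \<Rightarrow> bool) set" where
  "K j = (\<Union>s\<in>{s. idx s \<le> j}. insert (z s) ((\<lambda>a. z (s @ [a])) ` A' s))"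

lemma K_nd: "cantor_nowhere_dense (K j)"
  unfolding K_def
  by (rule nd_UN[OF finite_idx]) (rule nd_insert, use A'_prop in blast)

definition Wt :: "nat \<Rightarrow> bool list \<Rightarrow> bool list" where
  "Wt j u = (SOME v. cyl v \<subseteq> cyl u \<and> cyl v \<inter> K j = {})"

lemma Wt_prop: "cyl (Wt j u) \<subseteq> cyl u \<and> cyl (Wt j u) \<inter> K j = {}"
proof -
  have "\<exists>v. cyl v \<subseteq> cyl u \<and> cyl v \<inter> K j = {}" using K_nd[of j] unfolding cantor_nowhere_dense_def by blast
  then show ?thesis unfolding Wt_def by (rule someI_ex)
qed

primrec L :: "nat \<Rightarrow> nat" where
  "L 0 = 0"
| "L (Suc j) = L j + 1 + Max ((\<lambda>u. length (Wt j u)) ` {u. length u \<le> L j})"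

lemma L_Suc_gt: "L j < L (Suc j)" by simp

lemma L_mono: "j \<le> j' \<Longrightarrow> L j \<le> L j'"
  by (induction j' ) (auto simp: le_Suc_eq intro: le_trans[OF _ less_imp_le[OF L_Suc_gt]])

lemma L_ge: "j \<le> L j"
  by (induction j) (use L_Suc_gt in \<open>auto simp: Suc_le_eq intro: le_less_trans\<close>)

lemma Wt_len: "length u \<le> L j \<Longrightarrow> length (Wt j u) < L (Suc j)"
proof -
  assume u: "length u \<le> L j"
  have "finite ((\<lambda>u. length (Wt j u)) ` {u. length u \<le> L j})" using finite_bool_lists by simp
  moreover have "length (Wt j u) \<in> (\<lambda>u. length (Wt j u)) ` {u. length u \<le> L j}" using u by simp
  ultimately have "length (Wt j u) \<le> Max ((\<lambda>u. length (Wt j u)) ` {u. length u \<le> L j})" by (rule Max_ge)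
  then show ?thesis by simp
qed

definition kk :: "nat list \<Rightarrow> nat" where "kk s = L (idx s)"

definition AA :: "nat list \<Rightarrow> nat set" where
  "AA s = A' s \<inter> {a. \<forall>i<kk s. z (s @ [a]) i = z s i}"

lemma AA_U: "AA s \<in> U"
  unfolding AA_def using U_Int A'_prop z_agree by blast

definition pp :: "nat list set" where
  "pp = {t. \<forall>i<length t. t ! i \<in> AA (take i t)}"

lemma pp_Nil: "[] \<in> pp" unfolding pp_def by simp

lemma pp_PP: "pp \<in> PP U"
proof -
  have "{a. t @ [a] \<in> pp} \<in> U" if t: "t \<in> pp" for t
  proof -
    have "AA t \<subseteq> {a. t @ [a] \<in> pp}"
    proof
      fix a assume a: "a \<in> AA t"
      have "(t @ [a]) ! i \<in> AA (take i (t @ [a]))" if i: "i < length (t @ [a])" for i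
      proof (cases "i < length t")
        case True
        then show ?thesis using t unfolding pp_def by (simp add: nth_append)
      next
        case False
        then have "i = length t" using i by simp
        then show ?thesis using a by simp
      qed
      then show "a \<in> {a. t @ [a] \<in> pp}" unfolding pp_def by blast
    qed
    then show ?thesis using AA_U U_mono by blast
  qed
  then show ?thesis unfolding PP_def uopen_def using pp_Nil by blast
qed

lemma pp_nth: "t \<in> pp \<Longrightarrow> i < length t \<Longrightarrow> t ! i \<in> AA (take i t)"
  unfolding pp_def by blast

lemma key_agree:
  assumes t: "t \<in> pp" and mn: "m + d \<le> length t"
  shows "\<forall>i<kk (take m t). z (take (m + d) t) i = z (take m t) i"
  using mn
proof (induction d)
  case 0 then show ?case by simp
next
  case (Suc d)
  have lt: "m + d < length t" using Suc.prems by simp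
  then have tk: "take (m + Suc d) t = take (m + d) t @ [t ! (m + d)]"
    by (simp add: take_Suc_conv_app_nth)
  have "t ! (m + d) \<in> AA (take (m + d) t)" using pp_nth[OF t lt] .
  then have ag: "\<forall>i<kk (take (m + d) t). z (take (m + Suc d) t) i = z (take (m + d) t) i"
    unfolding AA_def tk by simp
  have "kk (take m t) \<le> kk (take (m + d) t)"
    unfolding kk_def by (rule L_mono, rule idx_take_mono) simp
  then show ?case using ag Suc.IH lt by auto
qed

lemma Z_nd: "cantor_nowhere_dense (z ` pp)"
  unfolding cantor_nowhere_dense_def
proof
  fix u :: "bool list"
  define j where "j = length u"
  define v where "v = Wt j u"
  have ul: "length u \<le> L j" using L_ge[of j] unfolding j_def by simp
  have vl: "length v < L (Suc j)" unfolding v_def using Wt_len[OF ul] .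
  have vu: "cyl v \<subseteq> cyl u" and vK: "cyl v \<inter> K j = {}" using Wt_prop unfolding v_def by blast+
  have "z t \<notin> cyl v" if t: "t \<in> pp" for t
  proof (cases "idx t \<le> j")
    case True
    then have "z t \<in> K j" unfolding K_def by blast
    then show ?thesis using vK by blast
  next
    case False
    define m where "m = (LEAST m. j < idx (take m t))"
    have ex: "j < idx (take (length t) t)" using False by simp
    have mle: "m \<le> length t" unfolding m_def using ex by (rule Least_le)
    have mj: "j < idx (take m t)" unfolding m_def using ex by (rule LeastI)
    have m0: "m \<noteq> 0" using mj by (cases m) (auto simp: idx_def)
    then obtain m' where m': "m = Suc m'" by (cases m) auto
    have "\<not> j < idx (take m' t)" unfolding m_def
      by (rule not_less_Least) (simp add: m' m_def[symmetric])
    then have sN: "idx (take m' t) \<le> j" by simp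
    have lt: "m' < length t" using mle m' by simp
    have tk: "take m t = take m' t @ [t ! m']" using lt m' by (simp add: take_Suc_conv_app_nth)
    have "t ! m' \<in> AA (take m' t)" using pp_nth[OF t lt] .
    then have "t ! m' \<in> A' (take m' t)" unfolding AA_def by blast
    then have "z (take m t) \<in> K j" unfolding K_def tk using sN by blast
    then have "z (take m t) \<notin> cyl v" using vK by blast
    then obtain i where i: "i < length v" "z (take m t) i \<noteq> v ! i" unfolding cyl_iff by blast
    have "L (Suc j) \<le> kk (take m t)" unfolding kk_def using mj by (intro L_mono) simp
    then have ik: "i < kk (take m t)" using i(1) vl by linarith
    have "\<forall>i<kk (take m t). z (take (m + (length t - m)) t) i = z (take m t) i"
      using key_agree[OF t, of m "length t - m"] mle by simp
    then have "z t i = z (take m t) i" using ik mle by simp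
    then show ?thesis using i unfolding cyl_iff by auto
  qed
  then have "cyl v \<inter> z ` pp = {}" by blast
  then show "\<exists>t. cyl t \<subseteq> cyl u \<and> cyl t \<inter> z ` pp = {}" using vu by blast
qed

end

context nctx
begin

lemma not_forces: "\<exists>D. cantor_open D \<and> cantor_dense D \<and> \<not> forces_in_open (PP U) (\<lambda>p q. q \<subseteq> p) F D"
proof -
  define D where "D = {x. \<exists>n. \<forall>y\<in>z ` pp. \<exists>i<n. y i \<noteq> x i}"
  have "cantor_open D"
    unfolding cantor_open_def
  proof
    fix x assume "x \<in> D"
    then obtain n where n: "\<forall>y\<in>z ` pp. \<exists>i<n. y i \<noteq> x i" unfolding D_def by blast
    have "cyl (map x [0..<n]) \<subseteq> D"
    proof
      fix y assume "y \<in> cyl (map x [0..<n])"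
      then have "\<forall>i<n. y i = x i" unfolding cyl_iff by simp
      have "\<exists>i<n. w i \<noteq> y i" if w: "w \<in> z ` pp" for w
      proof -
        obtain i where "i < n" "w i \<noteq> x i" using n w by blast
        then show ?thesis using \<open>\<forall>i<n. y i = x i\<close> by metis
      qed
      then have "\<forall>w\<in>z ` pp. \<exists>i<n. w i \<noteq> y i" by blast
      then show "y \<in> D" unfolding D_def by blast
    qed
    then show "\<exists>n. cyl (map x [0..<n]) \<subseteq> D" by blast
  qed
  moreover have "cantor_dense D"
    unfolding cantor_dense_def
  proof
    fix s
    obtain v where v: "cyl v \<subseteq> cyl s" "cyl v \<inter> z ` pp = {}"
      using Z_nd unfolding cantor_nowhere_dense_def by blast
    define x where "x = (\<lambda>i. if i < length v then v ! i else False)"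
    have xv: "x \<in> cyl v" unfolding cyl_iff x_def by simp
    have "\<forall>y\<in>z ` pp. \<exists>i<length v. y i \<noteq> x i"
    proof
      fix y assume y: "y \<in> z ` pp"
      show "\<exists>i<length v. y i \<noteq> x i"
      proof (rule ccontr)
        assume "\<not> (\<exists>i<length v. y i \<noteq> x i)"
        then have "y \<in> cyl v" unfolding cyl_iff x_def by auto
        then show False using v(2) y by blast
      qed
    qed
    then have "x \<in> D" unfolding D_def by blast
    then show "cyl s \<inter> D \<noteq> {}" using xv v(1) by blast
  qed
  moreover have "\<not> forces_in_open (PP U) (\<lambda>p q. q \<subseteq> p) F D"
  proof
    assume "forces_in_open (PP U) (\<lambda>p q. q \<subseteq> p) F D"
    from fioD[OF this pp_PP] obtain q s where q: "q \<in> PP U" "q \<subseteq> pp" "cyl s \<subseteq> D"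
      "\<forall>i<length s. F q i (s ! i)" by blast
    obtain w where w: "w \<in> q" using PP_ne[OF q(1)] by blast
    have "\<forall>i<length s. z w i = s ! i"
      using decI[OF q(1) w] q(4) dec_z by blast
    then have "z w \<in> cyl s" unfolding cyl_iff by blast
    then have "z w \<in> D" using q(3) by blast
    then obtain n where n: "\<forall>y\<in>z ` pp. \<exists>i<n. y i \<noteq> z w i" unfolding D_def by blast
    have "z w \<in> z ` pp" using w q(2) by blast
    then show False using n by blast
  qed
  ultimately show ?thesis by blast
qed

end

context uctx
begin

theorem nc_PP: "\<not> adds_cohen_real (PP U) (\<lambda>p q. q \<subseteq> p)"
proof
  assume "adds_cohen_real (PP U) (\<lambda>p q. q \<subseteq> p)"
  then obtain F where F: "real_name (PP U) (\<lambda>p q. q \<subseteq> p) F"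
    "\<forall>D. cantor_open D \<longrightarrow> cantor_dense D \<longrightarrow> forces_in_open (PP U) (\<lambda>p q. q \<subseteq> p) F D"
    unfolding adds_cohen_real_def by blast
  interpret nctx U F using F(1) by unfold_locales
  show False using not_forces F(2) by blast
qed

end

theorem theorem3:
  assumes "\<exists>U. ultrafilter_on_nat U \<and> nonprincipal U \<and> nowhere_dense_filter U"
  shows "\<exists>(P :: nat set set set) le.
           forcing_notion P le \<and> sigma_centered P le \<and>
           splitting_everywhere P le \<and> \<not> adds_cohen_real P le"
proof -
  obtain U where U: "ultrafilter_on_nat U" "nonprincipal U" "nowhere_dense_filter U" using assms by blast
  interpret uctx U using U by unfold_locales
  define e :: "nat list \<Rightarrow> nat set" where "e = (\<lambda>l. {list_encode l})"
  have inj: "inj e" unfolding e_def inj_def using inj_list_encode[of UNIV] by (simp add: inj_def)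
  have "forcing_notion ((\<lambda>X. e ` X) ` PP U) (\<lambda>p q. q \<subseteq> p)" by (rule tr_fn[OF fn_PP])
  moreover have "sigma_centered ((\<lambda>X. e ` X) ` PP U) (\<lambda>p q. q \<subseteq> p)" by (rule tr_sc[OF sc_PP])
  moreover have "splitting_everywhere ((\<lambda>X. e ` X) ` PP U) (\<lambda>p q. q \<subseteq> p)" by (rule tr_sp[OF inj sp_PP])
  moreover have "\<not> adds_cohen_real ((\<lambda>X. e ` X) ` PP U) (\<lambda>p q. q \<subseteq> p)" by (rule tr_nc[OF inj nc_PP])
  ultimately show ?thesis by blast
qed

end
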